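(* For every $\bar y\in\mathcal P$ there exists a feasible assignment for $\bar y$, and if $\bar x$ is an optimal assignment w.r.t. $\bar y$ and $w'$, then $\mathrm{cost}_{w'}(\bar x,\bar y)\le T(\bar y)$.
   Context: Setting: $p\ge1$; a finite metric $d$ on $P\cup\mathcal F$; $f\ge0$; $w:P\to\mathbb{R}_{\ge0}$; matroid $\mathcal M$ on $\mathcal F$ with rank $r$. For demands $\omega$, $\mathrm{cost}_\omega(x,y)=\sum_u f(u)y_u+\sum_{v,u}\omega(v)d(v,u)^px_{vu}$; $\textsc{FacilityMatLP}(\omega,\mathcal M)$ minimizes it s.t. $\sum_u x_{vu}\ge1$, $\sum_{u\in S}y_u\le r(S)$ ($S\subseteq\mathcal F$), $0\le x_{vu}\le y_u$. Given $\bar y$, a feasible assignment is $x$ with $\sum_u x_{vu}\ge1$ and $0\le x_{vu}\le\bar y_u$; an optimal assignment minimizes $\sum_{v,u}\omega(v)d(v,u)^px_{vu}$ among these. $(x,y)$ is an optimal LP solution for $w$ with $\sum_u x_{vu}=1$; $\mathcal R(v)=(\sum_ud(v,u)^px_{vu})^{1/p}$. Client consolidation gives $w'$ (order clients by non-decreasing $\mathcal R$; for $i<j$, if $d(v_i,v_j)\le2^{(p+1)/p}\mathcal R(v_j)$ and $w'(v_i)>0$, move all of $w'(v_j)$ to $v_i$); $P'=\mathrm{supp}(w')$, $|P'|\ge2$. For $v\in P'$: $F(v)$ = facilities whose nearest client in $P'$ is $v$ (ties arbitrary, a partition of $\mathcal F$); $F'(v)=\{u\in F(v):d(u,v)\le2^{1/p}\mathcal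 R(v)\}$; $\gamma_v=\min_{u\notin F(v)}d(v,u)$; $G(v)=\{u\in F(v):d(v,u)\le\gamma_v\}$. $T(\bar y)=\sum_uf(u)\bar y_u+\sum_{v\in P'}w'(v)\big(\sum_{u\in G(v)}d(v,u)^p\bar y_u+3^p\gamma_v^p(1-\sum_{u\in G(v)}\bar y_u)\big)$. $\mathcal P=\{\bar y\in\mathbb{R}^{\mathcal F}_{\ge0}:\sum_{u\in S}\bar y_u\le r(S)\ \forall S\subseteq\mathcal F;\ \sum_{u\in F'(v)}\bar y_u\ge1/2\text{ and }\sum_{u\in G(v)}\bar y_u\le1\ \forall v\in P'\}$. *)

theory Defs
  imports Main "HOL-Library.Multiset" Complex_Main
begin

definition metric_on :: "'a set \<Rightarrow> ('a \<Rightarrow> 'a \<Rightarrow> real) \<Rightarrow> bool" where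
  "metric_on A d \<longleftrightarrow>
     (\<forall>a\<in>A. \<forall>b\<in>A. 0 \<le> d a b \<and> (d a b = 0 \<longleftrightarrow> a = b) \<and> d a b = d b a) \<and>
     (\<forall>a\<in>A. \<forall>b\<in>A. \<forall>c\<in>A. d a c \<le> d a b + d b c)"

definition matroid :: "'a set \<Rightarrow> ('a set \<Rightarrow> bool) \<Rightarrow> bool" where
  "matroid E indep \<longleftrightarrow>
     finite E \<and> (\<forall>X. indep X \<longrightarrow> X \<subseteq> E) \<and> indep {} \<and>
     (\<forall>X Y. indep X \<and> Y \<subseteq> X \<longrightarrow> indep Y) \<and>
     (\<forall>X Y. indep X \<and> indep Y \<and> card X < card Y \<longrightarrow> (\<exists>e\<in>Y - X. indep (insert e X)))"

definition mrank :: "('a set \<Rightarrow> bool) \<Rightarrow> 'a set \<Rightarrow> nat" where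
  "mrank indep S = Max {card X | X. X \<subseteq> S \<and> indep X}"

definition lp_cost ::
  "'a set \<Rightarrow> 'a set \<Rightarrow> ('a \<Rightarrow> 'a \<Rightarrow> real) \<Rightarrow> real \<Rightarrow> ('a \<Rightarrow> real) \<Rightarrow> ('a \<Rightarrow> real)
   \<Rightarrow> ('a \<Rightarrow> 'a \<Rightarrow> real) \<Rightarrow> ('a \<Rightarrow> real) \<Rightarrow> real" where
  "lp_cost P F d p f \<omega> x y =
     (\<Sum>u\<in>F. f u * y u) + (\<Sum>v\<in>P. \<Sum>u\<in>F. \<omega> v * d v u powr p * x v u)"

definition lp_feasible ::
  "'a set \<Rightarrow> 'a set \<Rightarrow> ('a set \<Rightarrow> nat) \<Rightarrow> ('a \<Rightarrow> 'a \<Rightarrow> real) \<Rightarrow> ('a \<Rightarrow> real) \<Rightarrow> bool" where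
  "lp_feasible P F r x y \<longleftrightarrow>
     (\<forall>v\<in>P. (\<Sum>u\<in>F. x v u) \<ge> 1) \<and>
     (\<forall>S. S \<subseteq> F \<longrightarrow> (\<Sum>u\<in>S. y u) \<le> real (r S)) \<and>
     (\<forall>v\<in>P. \<forall>u\<in>F. 0 \<le> x v u \<and> x v u \<le> y u)"

definition lp_optimal ::
  "'a set \<Rightarrow> 'a set \<Rightarrow> ('a \<Rightarrow> 'a \<Rightarrow> real) \<Rightarrow> real \<Rightarrow> ('a \<Rightarrow> real) \<Rightarrow> ('a \<Rightarrow> real)
   \<Rightarrow> ('a set \<Rightarrow> nat) \<Rightarrow> ('a \<Rightarrow> 'a \<Rightarrow> real) \<Rightarrow> ('a \<Rightarrow> real) \<Rightarrow> bool" where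
  "lp_optimal P F d p f \<omega> r x y \<longleftrightarrow>
     lp_feasible P F r x y \<and>
     (\<forall>x' y'. lp_feasible P F r x' y' \<longrightarrow> lp_cost P F d p f \<omega> x y \<le> lp_cost P F d p f \<omega> x' y')"

definition feasible_assign :: "'a set \<Rightarrow> 'a set \<Rightarrow> ('a \<Rightarrow> real) \<Rightarrow> ('a \<Rightarrow> 'a \<Rightarrow> real) \<Rightarrow> bool" where
  "feasible_assign P F yb x \<longleftrightarrow>
     (\<forall>v\<in>P. (\<Sum>u\<in>F. x v u) \<ge> 1) \<and> (\<forall>v\<in>P. \<forall>u\<in>F. 0 \<le> x v u \<and> x v u \<le> yb u)"

definition assign_cost ::
  "'a set \<Rightarrow> 'a set \<Rightarrow> ('a \<Rightarrow> 'a \<Rightarrow> real) \<Rightarrow> real \<Rightarrow> ('a \<Rightarrow> real) \<Rightarrow> ('a \<Rightarrow> 'a \<Rightarrow> real) \<Rightarrow> real" where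
  "assign_cost P F d p \<omega> x = (\<Sum>v\<in>P. \<Sum>u\<in>F. \<omega> v * d v u powr p * x v u)"

definition optimal_assign ::
  "'a set \<Rightarrow> 'a set \<Rightarrow> ('a \<Rightarrow> 'a \<Rightarrow> real) \<Rightarrow> real \<Rightarrow> ('a \<Rightarrow> real) \<Rightarrow> ('a \<Rightarrow> real)
   \<Rightarrow> ('a \<Rightarrow> 'a \<Rightarrow> real) \<Rightarrow> bool" where
  "optimal_assign P F d p \<omega> yb x \<longleftrightarrow>
     feasible_assign P F yb x \<and>
     (\<forall>x'. feasible_assign P F yb x' \<longrightarrow> assign_cost P F d p \<omega> x \<le> assign_cost P F d p \<omega> x')"

definition clientR :: "'a set \<Rightarrow> ('a \<Rightarrow> 'a \<Rightarrow> real) \<Rightarrow> real \<Rightarrow> ('a \<Rightarrow> 'a \<Rightarrow> real) \<Rightarrow> 'a \<Rightarrow> real" where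
  "clientR F d p x v = (\<Sum>u\<in>F. d v u powr p * x v u) powr (1 / p)"

definition consol_step ::
  "('a \<Rightarrow> 'a \<Rightarrow> real) \<Rightarrow> real \<Rightarrow> ('a \<Rightarrow> real) \<Rightarrow> 'a list \<Rightarrow> nat \<times> nat \<Rightarrow> ('a \<Rightarrow> real) \<Rightarrow> ('a \<Rightarrow> real)" where
  "consol_step d p R vs ij w' =
     (case ij of (i, j) \<Rightarrow>
       if d (vs ! i) (vs ! j) \<le> 2 powr ((p + 1) / p) * R (vs ! j) \<and> w' (vs ! i) > 0
       then w'(vs ! i := w' (vs ! i) + w' (vs ! j), vs ! j := 0)
       else w')"

definition consolidate ::
  "('a \<Rightarrow> 'a \<Rightarrow> real) \<Rightarrow> real \<Rightarrow> ('a \<Rightarrow> real) \<Rightarrow> 'a list \<Rightarrow> ('a \<Rightarrow> real) \<Rightarrow> ('a \<Rightarrow> real)" where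
  "consolidate d p R vs w =
     fold (consol_step d p R vs) [(i, j). j \<leftarrow> [0..<length vs], i \<leftarrow> [0..<j]] w"

definition Fprime :: "('a \<Rightarrow> 'a \<Rightarrow> real) \<Rightarrow> real \<Rightarrow> ('a \<Rightarrow> real) \<Rightarrow> ('a \<Rightarrow> 'a set) \<Rightarrow> 'a \<Rightarrow> 'a set" where
  "Fprime d p R Fp v = {u \<in> Fp v. d u v \<le> 2 powr (1 / p) * R v}"

definition gammav :: "'a set \<Rightarrow> ('a \<Rightarrow> 'a \<Rightarrow> real) \<Rightarrow> ('a \<Rightarrow> 'a set) \<Rightarrow> 'a \<Rightarrow> real" where
  "gammav F d Fp v = Min ((\<lambda>u. d v u) ` (F - Fp v))"

definition Gset :: "'a set \<Rightarrow> ('a \<Rightarrow> 'a \<Rightarrow> real) \<Rightarrow> ('a \<Rightarrow> 'a set) \<Rightarrow> 'a \<Rightarrow> 'a set" where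
  "Gset F d Fp v = {u \<in> Fp v. d v u \<le> gammav F d Fp v}"

definition T_bound ::
  "'a set \<Rightarrow> 'a set \<Rightarrow> ('a \<Rightarrow> 'a \<Rightarrow> real) \<Rightarrow> real \<Rightarrow> ('a \<Rightarrow> real) \<Rightarrow> ('a \<Rightarrow> real)
   \<Rightarrow> ('a \<Rightarrow> 'a set) \<Rightarrow> ('a \<Rightarrow> real) \<Rightarrow> real" where
  "T_bound P' F d p f w' Fp yb =
     (\<Sum>u\<in>F. f u * yb u) +
     (\<Sum>v\<in>P'. w' v * ((\<Sum>u\<in>Gset F d Fp v. d v u powr p * yb u) +
        3 powr p * gammav F d Fp v powr p * (1 - (\<Sum>u\<in>Gset F d Fp v. yb u))))"

definition in_polytope ::
  "'a set \<Rightarrow> 'a set \<Rightarrow> ('a \<Rightarrow> 'a \<Rightarrow> real) \<Rightarrow> real \<Rightarrow> ('a set \<Rightarrow> nat) \<Rightarrow> ('a \<Rightarrow> real)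
   \<Rightarrow> ('a \<Rightarrow> 'a set) \<Rightarrow> ('a \<Rightarrow> real) \<Rightarrow> bool" where
  "in_polytope P' F d p r R Fp yb \<longleftrightarrow>
     (\<forall>u\<in>F. 0 \<le> yb u) \<and>
     (\<forall>S. S \<subseteq> F \<longrightarrow> (\<Sum>u\<in>S. yb u) \<le> real (r S)) \<and>
     (\<forall>v\<in>P'. (\<Sum>u\<in>Fprime d p R Fp v. yb u) \<ge> 1 / 2 \<and> (\<Sum>u\<in>Gset F d Fp v. yb u) \<le> 1)"

end

theory Submission
  imports Defs
begin


lemma consol_zero: "g c = 0 \<Longrightarrow> consol_step d p R vs ij g c = 0"
  unfolding consol_step_def by (cases ij) auto

lemma fold_zero: "g c = 0 \<Longrightarrow> fold (consol_step d p R vs) L g c = 0"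
  by (induction L arbitrary: g) (auto simp: consol_zero)

lemma consol_nonneg:
  assumes "\<forall>v\<in>set vs. 0 \<le> g v" "fst ij < length vs" "snd ij < length vs"
  shows "\<forall>v\<in>set vs. 0 \<le> consol_step d p R vs ij g v"
  using assms unfolding consol_step_def
  by (cases ij) (auto simp: nth_mem)

lemma fold_nonneg:
  assumes "\<forall>v\<in>set vs. 0 \<le> g v" "\<forall>ij\<in>set L. fst ij < length vs \<and> snd ij < length vs"
  shows "\<forall>v\<in>set vs. 0 \<le> fold (consol_step d p R vs) L g v"
  using assms
proof (induction L arbitrary: g)
  case Nil then show ?case by simp
next
  case (Cons a L)
  then show ?case using consol_nonneg[of vs g a] by simp
qed

lemma pairs_set: "set [(i, j). j \<leftarrow> [0..<n], i \<leftarrow> [0..<j]] = {(i,j). i<j \<and> j<n}"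
  by auto

lemma sep_idx:
  assumes "i < j" "j < length vs" "\<forall>v\<in>set vs. 0 \<le> w v"
    and "consolidate d p R vs w (vs!i) \<noteq> 0" "consolidate d p R vs w (vs!j) \<noteq> 0"
  shows "2 powr ((p+1)/p) * R (vs!j) < d (vs!i) (vs!j)"
proof -
  let ?L = "[(i, j). j \<leftarrow> [0..<length vs], i \<leftarrow> [0..<j]]"
  let ?f = "consol_step d p R vs"
  have "(i,j) \<in> set ?L" using assms(1,2) by (simp only: pairs_set) auto
  then obtain L1 L2 where L: "?L = L1 @ (i,j) # L2" by (meson split_list)
  define g where "g = fold ?f L1 w"
  define h where "h = ?f (i,j) g"
  have W: "consolidate d p R vs w = fold ?f L2 h"
    unfolding consolidate_def L h_def g_def by simp
  have hj: "h (vs!j) \<noteq> 0" using assms(5) W fold_zero by metis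
  have "consolidate d p R vs w = fold ?f ((i,j)#L2) g" using W h_def by simp
  then have gi: "g (vs!i) \<noteq> 0" using assms(4) fold_zero by metis
  have "\<forall>ij\<in>set L1. fst ij < length vs \<and> snd ij < length vs"
  proof
    fix ij assume "ij \<in> set L1"
    then have "ij \<in> set ?L" using L by simp
    then show "fst ij < length vs \<and> snd ij < length vs" by (simp only: pairs_set) auto
  qed
  then have "\<forall>v\<in>set vs. 0 \<le> g v" unfolding g_def using fold_nonneg assms(3) by blast
  then have "g (vs!i) > 0" using gi assms(1,2) by (metis less_eq_real_def less_trans nth_mem)
  then show ?thesis using hj unfolding h_def consol_step_def by (auto split: if_splits)
qed



lemma client_assign:
  fixes F G A :: "'a set" and yb \<delta> :: "'a \<Rightarrow> real" and g p :: real
  assumes fin: "finite F" and GF: "G \<subseteq> F" and AF: "A \<subseteq> F" and dis: "G \<inter> A = {}"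
    and ybn: "\<forall>u\<in>F. 0 \<le> yb u"
    and sG1: "(\<Sum>u\<in>G. yb u) \<le> 1" and sG2: "(\<Sum>u\<in>G. yb u) \<ge> 1/2"
    and sA: "(\<Sum>u\<in>A. yb u) \<ge> 1/2"
    and dA: "\<forall>u\<in>A. 0 \<le> \<delta> u \<and> \<delta> u \<le> 3 * g" and p0: "0 \<le> p" and g0: "0 \<le> g"
  shows "\<exists>z. (\<forall>u\<in>F. 0 \<le> z u \<and> z u \<le> yb u) \<and> (\<Sum>u\<in>F. z u) = 1 \<and>
    (\<Sum>u\<in>F. \<delta> u powr p * z u) \<le> (\<Sum>u\<in>G. \<delta> u powr p * yb u) + 3 powr p * g powr p * (1 - (\<Sum>u\<in>G. yb u))"
proof -
  define s where "s = (\<Sum>u\<in>G. yb u)"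
  define a where "a = (\<Sum>u\<in>A. yb u)"
  define c where "c = (1 - s) / a"
  have a0: "a > 0" using sA a_def by simp
  have c0: "0 \<le> c" using a0 sG1 s_def c_def by simp
  have c1: "c \<le> 1" using a0 sG2 sA s_def a_def c_def by (simp add: divide_le_eq_1)
  have ca: "c * a = 1 - s" using a0 c_def by simp
  define z where "z = (\<lambda>u. (if u \<in> G then yb u else 0) + (if u \<in> A then c * yb u else 0))"
  have finG: "finite G" and finA: "finite A" using fin GF AF finite_subset by auto
  have sumif: "(\<Sum>u\<in>F. if u \<in> B then h u else 0) = (\<Sum>u\<in>B. h u)" if "B \<subseteq> F" for B and h :: "'a \<Rightarrow> real"
    using sum.inter_restrict[OF fin, of h B, symmetric] that by (simp add: Int_absorb1)
  have 1: "\<forall>u\<in>F. 0 \<le> z u \<and> z u \<le> yb u"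
  proof
    fix u assume u: "u \<in> F"
    have "0 \<le> yb u" using u ybn by auto
    moreover have "c * yb u \<le> yb u" using c1 \<open>0 \<le> yb u\<close> using mult_right_mono[OF c1 \<open>0 \<le> yb u\<close>] by simp
    ultimately show "0 \<le> z u \<and> z u \<le> yb u" using dis c0 unfolding z_def by auto
  qed
  have "(\<Sum>u\<in>F. z u) = (\<Sum>u\<in>G. yb u) + (\<Sum>u\<in>A. c * yb u)"
    unfolding z_def sum.distrib using sumif[OF GF] sumif[OF AF] by simp
  also have "\<dots> = 1" using ca s_def a_def by (simp add: sum_distrib_left[symmetric])
  finally have 2: "(\<Sum>u\<in>F. z u) = 1" .
  have "(\<Sum>u\<in>F. \<delta> u powr p * z u) = (\<Sum>u\<in>G. \<delta> u powr p * yb u) + (\<Sum>u\<in>A. \<delta> u powr p * (c * yb u))"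
  proof -
    have "\<And>u. \<delta> u powr p * z u = (if u \<in> G then \<delta> u powr p * yb u else 0) + (if u \<in> A then \<delta> u powr p * (c * yb u) else 0)"
      unfolding z_def by (simp add: distrib_left)
    then have "(\<Sum>u\<in>F. \<delta> u powr p * z u) = (\<Sum>u\<in>F. (if u \<in> G then \<delta> u powr p * yb u else 0)) + (\<Sum>u\<in>F. (if u \<in> A then \<delta> u powr p * (c * yb u) else 0))"
      by (simp add: sum.distrib)
    then show ?thesis using sumif[OF GF, of "\<lambda>u. \<delta> u powr p * yb u"] sumif[OF AF, of "\<lambda>u. \<delta> u powr p * (c * yb u)"] by simp
  qed
  also have "(\<Sum>u\<in>A. \<delta> u powr p * (c * yb u)) \<le> (\<Sum>u\<in>A. (3*g) powr p * (c * yb u))"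
  proof (rule sum_mono)
    fix u assume u: "u \<in> A"
    have "\<delta> u powr p \<le> (3*g) powr p" using dA u p0 by (simp add: powr_mono2)
    moreover have "0 \<le> c * yb u" using c0 ybn u AF by auto
    ultimately show "\<delta> u powr p * (c * yb u) \<le> (3*g) powr p * (c * yb u)" by (rule mult_right_mono)
  qed
  also have "(\<Sum>u\<in>A. (3*g) powr p * (c * yb u)) = 3 powr p * g powr p * (1 - s)"
    using ca a_def g0 by (simp add: sum_distrib_left[symmetric] powr_mult mult.assoc)
  finally have 3: "(\<Sum>u\<in>F. \<delta> u powr p * z u) \<le> (\<Sum>u\<in>G. \<delta> u powr p * yb u) + 3 powr p * g powr p * (1 - s)"
    by simp
  show ?thesis using 1 2 3 s_def by blast
qed



theorem mainTheorem14:
  fixes P F :: "'a set" and d :: "'a \<Rightarrow> 'a \<Rightarrow> real" and p :: real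
    and f w :: "'a \<Rightarrow> real" and indep :: "'a set \<Rightarrow> bool"
    and x :: "'a \<Rightarrow> 'a \<Rightarrow> real" and y :: "'a \<Rightarrow> real"
    and vs :: "'a list" and Fp :: "'a \<Rightarrow> 'a set" and yb :: "'a \<Rightarrow> real"
  assumes p_ge: "p \<ge> 1"
    and finP: "finite P" and finF: "finite F"
    and metric: "metric_on (P \<union> F) d"
    and f_nonneg: "\<forall>u\<in>F. f u \<ge> 0"
    and w_nonneg: "\<forall>v\<in>P. w v \<ge> 0"
    and mat: "matroid F indep"
    and lp_opt: "lp_optimal P F d p f w (mrank indep) x y"
    and x_sum: "\<forall>v\<in>P. (\<Sum>u\<in>F. x v u) = 1"
    and vs_enum: "distinct vs" "set vs = P"
    and vs_sorted: "sorted_wrt (\<lambda>a b. clientR F d p x a \<le> clientR F d p x b) vs"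
  defines "w' \<equiv> consolidate d p (clientR F d p x) vs w"
    and "P' \<equiv> {v \<in> P. consolidate d p (clientR F d p x) vs w v \<noteq> 0}"
  assumes P'_card: "card P' \<ge> 2"
    and Fp_sub: "\<forall>v\<in>P'. Fp v \<subseteq> F"
    and Fp_part: "\<forall>u\<in>F. \<exists>!v. v \<in> P' \<and> u \<in> Fp v"
    and Fp_nearest: "\<forall>v\<in>P'. \<forall>u\<in>Fp v. \<forall>v'\<in>P'. d v u \<le> d v' u"
    and yb_in: "in_polytope P' F d p (mrank indep) (clientR F d p x) Fp yb"
  shows "(\<exists>xb. feasible_assign P F yb xb) \<and>
         (\<forall>xb. optimal_assign P F d p w' yb xb \<longrightarrow>
                lp_cost P F d p f w' xb yb \<le> T_bound P' F d p f w' Fp yb)"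
  
proof -
  have dnn: "\<And>a b. a \<in> P \<union> F \<Longrightarrow> b \<in> P \<union> F \<Longrightarrow> 0 \<le> d a b"
    and dsym: "\<And>a b. a \<in> P \<union> F \<Longrightarrow> b \<in> P \<union> F \<Longrightarrow> d a b = d b a"
    and dtri: "\<And>a b c. a \<in> P \<union> F \<Longrightarrow> b \<in> P \<union> F \<Longrightarrow> c \<in> P \<union> F \<Longrightarrow> d a c \<le> d a b + d b c"
    using metric unfolding metric_on_def by blast+
  let ?R = "clientR F d p x"
  have P'w: "P' = {v \<in> P. w' v \<noteq> 0}" using P'_def w'_def by simp
  have P'P: "P' \<subseteq> P" using P'w by auto
  have ybn: "\<forall>u\<in>F. 0 \<le> yb u" using yb_in unfolding in_polytope_def by blast
  have ybF': "\<And>v. v \<in> P' \<Longrightarrow> (\<Sum>u\<in>Fprime d p ?R Fp v. yb u) \<ge> 1/2"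
    and ybG: "\<And>v. v \<in> P' \<Longrightarrow> (\<Sum>u\<in>Gset F d Fp v. yb u) \<le> 1"
    using yb_in unfolding in_polytope_def by blast+
  have F'sub: "\<And>v. v \<in> P' \<Longrightarrow> Fprime d p ?R Fp v \<subseteq> Fp v"
    unfolding Fprime_def by auto
  have disj: "\<And>v1 v2 u. v1 \<in> P' \<Longrightarrow> v2 \<in> P' \<Longrightarrow> u \<in> Fp v1 \<Longrightarrow> u \<in> Fp v2 \<Longrightarrow> v1 = v2"
    using Fp_part Fp_sub by blast
  have wnn: "\<forall>v\<in>P. 0 \<le> w' v"
  proof -
    have "\<forall>ij\<in>set [(i, j). j \<leftarrow> [0..<length vs], i \<leftarrow> [0..<j]]. fst ij < length vs \<and> snd ij < length vs"
      by (simp only: pairs_set) auto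
    then show ?thesis using fold_nonneg[of vs w] w_nonneg vs_enum unfolding w'_def consolidate_def by blast
  qed
  have sep: "2 powr ((p+1)/p) * ?R b < d a b" if ab: "a \<in> P'" "b \<in> P'" "a \<noteq> b" for a b
  proof -
    obtain i where i: "i < length vs" "vs ! i = a" using ab P'P vs_enum by (metis in_set_conv_nth subsetD)
    obtain j where j: "j < length vs" "vs ! j = b" using ab P'P vs_enum by (metis in_set_conv_nth subsetD)
    have ij: "i \<noteq> j" using i j ab by auto
    have nz: "consolidate d p ?R vs w a \<noteq> 0" "consolidate d p ?R vs w b \<noteq> 0" using ab P'_def by auto
    have wn: "\<forall>v\<in>set vs. 0 \<le> w v" using w_nonneg vs_enum by simp
    have abP: "a \<in> P \<union> F" "b \<in> P \<union> F" using ab P'P by auto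
    show ?thesis
    proof (cases "i < j")
      case True
      then show ?thesis using sep_idx[OF True j(1) wn] nz i j by simp
    next
      case False
      then have ji: "j < i" using ij by simp
      have "2 powr ((p+1)/p) * ?R a < d b a" using sep_idx[OF ji i(1) wn] nz i j by simp
      moreover have "?R b \<le> ?R a" using sorted_wrt_nth_less[OF vs_sorted ji i(1)] i j by simp
      moreover have "(0::real) \<le> 2 powr ((p+1)/p)" by simp
      ultimately show ?thesis using dsym[OF abP] by (smt (verit) mult_left_mono)
    qed
  qed
  have two: "2 powr ((p+1)/p) = 2 * 2 powr (1/p)"
  proof -
    have "(p+1)/p = 1 + 1/p" using p_ge by (simp add: field_simps)
    then show ?thesis by (simp add: powr_add)
  qed
  obtain v1 v2 where v12: "v1 \<in> P'" "v2 \<in> P'" "v1 \<noteq> v2"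
  proof -
    have "card P' > 0" using P'_card by simp
    then have fP: "finite P'" "P' \<noteq> {}" using card_gt_0_iff by blast+
    then obtain a where a: "a \<in> P'" by blast
    have "card (P' - {a}) \<ge> 1" using P'_card a fP by (simp add: card_Diff_singleton)
    then have "P' - {a} \<noteq> {}" by (metis card.empty not_one_le_zero)
    then obtain b where "b \<in> P' - {a}" by blast
    then show ?thesis using that a by blast
  qed
  have other: "\<exists>v'. v' \<in> P' \<and> v' \<noteq> v" for v using v12 by metis
  have F'F: "\<And>v. v \<in> P' \<Longrightarrow> Fprime d p ?R Fp v \<subseteq> F" using F'sub Fp_sub by blast
  have sumF: "(\<Sum>u\<in>F. yb u) \<ge> 1"
  proof -
    let ?A = "Fprime d p ?R Fp v1" and ?B = "Fprime d p ?R Fp v2"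
    have d: "?A \<inter> ?B = {}" using disj F'sub v12 by blast
    have fA: "finite ?A" "finite ?B" using F'F v12 finF finite_subset by blast+
    have "(\<Sum>u\<in>?A \<union> ?B. yb u) = (\<Sum>u\<in>?A. yb u) + (\<Sum>u\<in>?B. yb u)"
      using sum.union_disjoint[OF fA d] .
    also have "\<dots> \<ge> 1" using ybF'[OF v12(1)] ybF'[OF v12(2)] by linarith
    moreover have "(\<Sum>u\<in>?A \<union> ?B. yb u) \<le> (\<Sum>u\<in>F. yb u)"
      using F'F v12 ybn finF by (intro sum_mono2) auto
    ultimately show ?thesis by linarith
  qed
  have feas_yb: "(\<Sum>u\<in>F. yb u) \<ge> 1 \<and> (\<forall>u\<in>F. 0 \<le> yb u \<and> yb u \<le> yb u)" using sumF ybn by simp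
  have client: "\<exists>z. (\<forall>u\<in>F. 0 \<le> z u \<and> z u \<le> yb u) \<and> (\<Sum>u\<in>F. z u) = 1 \<and>
    (\<Sum>u\<in>F. d v u powr p * z u) \<le> (\<Sum>u\<in>Gset F d Fp v. d v u powr p * yb u)
       + 3 powr p * gammav F d Fp v powr p * (1 - (\<Sum>u\<in>Gset F d Fp v. yb u))" if v: "v \<in> P'" for v
  proof -
    let ?g = "gammav F d Fp v"
    let ?G = "Gset F d Fp v"
    obtain v' where v': "v' \<in> P'" "v' \<noteq> v" using other by blast
    have "Fprime d p ?R Fp v' \<noteq> {}" using ybF'[OF v'(1)] by auto
    then obtain u1 where u1: "u1 \<in> Fprime d p ?R Fp v'" by blast
    have "u1 \<in> F - Fp v" using u1 F'F[OF v'(1)] F'sub[OF v'(1)] disj v v' by blast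
    then have ne: "F - Fp v \<noteq> {}" by blast
    have "?g \<in> (\<lambda>u. d v u) ` (F - Fp v)" unfolding gammav_def using ne finF by (intro Min_in) auto
    then obtain u0 where u0: "u0 \<in> F - Fp v" "d v u0 = ?g" by (metis imageE)
    have gmin: "\<And>u. u \<in> F - Fp v \<Longrightarrow> ?g \<le> d v u" unfolding gammav_def using finF by (intro Min_le) auto
    obtain v'' where v'': "v'' \<in> P'" "u0 \<in> Fp v''" using Fp_part u0 by blast
    have vv: "v'' \<noteq> v" using v'' u0 by blast
    have Pv: "v \<in> P \<union> F" "v'' \<in> P \<union> F" "u0 \<in> P \<union> F" using v v'' u0 P'P by auto
    have "d v'' u0 \<le> d v u0" using Fp_nearest v'' v by blast
    then have dvv: "d v v'' \<le> 2 * ?g" using dtri[OF Pv(1) Pv(3) Pv(2)] dsym[OF Pv(3) Pv(2)] u0 by linarith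
    have s1: "2 * 2 powr (1/p) * ?R v < d v'' v" using sep[OF v''(1) v vv] two by simp
    have s2: "2 * 2 powr (1/p) * ?R v'' < d v v''" using sep[OF v v''(1) vv[symmetric]] two by simp
    have r1: "2 powr (1/p) * ?R v < ?g" using s1 dvv dsym[OF Pv(1) Pv(2)] by linarith
    have r2: "2 powr (1/p) * ?R v'' < ?g" using s2 dvv by linarith
    have g0: "0 \<le> ?g" using u0 dnn Pv by metis
    have GF: "?G \<subseteq> F" using Fp_sub v unfolding Gset_def by auto
    have F'G: "Fprime d p ?R Fp v \<subseteq> ?G"
    proof
      fix u assume u: "u \<in> Fprime d p ?R Fp v"
      then have "u \<in> Fp v" "d u v \<le> 2 powr (1/p) * ?R v" unfolding Fprime_def by auto
      moreover have "u \<in> P \<union> F" using \<open>u \<in> Fp v\<close> Fp_sub v by auto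
      ultimately show "u \<in> ?G" using r1 dsym[OF Pv(1)] unfolding Gset_def by fastforce
    qed
    have sG2: "(\<Sum>u\<in>?G. yb u) \<ge> 1/2"
    proof -
      have "(\<Sum>u\<in>Fprime d p ?R Fp v. yb u) \<le> (\<Sum>u\<in>?G. yb u)"
        using F'G GF ybn finF finite_subset by (intro sum_mono2) auto
      then show ?thesis using ybF'[OF v] by linarith
    qed
    let ?A = "Fprime d p ?R Fp v''"
    have dis: "?G \<inter> ?A = {}" using disj F'sub v v'' vv unfolding Gset_def by blast
    have dA: "\<forall>u\<in>?A. 0 \<le> d v u \<and> d v u \<le> 3 * ?g"
    proof
      fix u assume u: "u \<in> ?A"
      then have uF: "u \<in> P \<union> F" using F'F[OF v''(1)] by auto
      have du: "d u v'' \<le> 2 powr (1/p) * ?R v''" using u unfolding Fprime_def by auto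
      have "d v u \<le> d v u0 + d u0 u" using dtri[OF Pv(1) Pv(3) uF] .
      moreover have "d u0 u \<le> d u0 v'' + d v'' u" using dtri[OF Pv(3) Pv(2) uF] .
      moreover have "d u0 v'' \<le> ?g" using \<open>d v'' u0 \<le> d v u0\<close> u0 dsym[OF Pv(3) Pv(2)] by simp
      moreover have "d v'' u \<le> ?g" using du r2 dsym[OF uF Pv(2)] by simp
      ultimately show "0 \<le> d v u \<and> d v u \<le> 3 * ?g" using u0 dnn[OF Pv(1) uF] by linarith
    qed
    show ?thesis
      by (rule client_assign[OF finF GF F'F[OF v''(1)] dis ybn ybG[OF v] sG2 ybF'[OF v''(1)] dA _ g0])
        (use p_ge in simp)
  qed
  then have "\<forall>v\<in>P'. \<exists>z. (\<forall>u\<in>F. 0 \<le> z u \<and> z u \<le> yb u) \<and> (\<Sum>u\<in>F. z u) = 1 \<and>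
    (\<Sum>u\<in>F. d v u powr p * z u) \<le> (\<Sum>u\<in>Gset F d Fp v. d v u powr p * yb u)
       + 3 powr p * gammav F d Fp v powr p * (1 - (\<Sum>u\<in>Gset F d Fp v. yb u))" by blast
  then have "\<exists>Z. \<forall>v\<in>P'. (\<forall>u\<in>F. 0 \<le> Z v u \<and> Z v u \<le> yb u) \<and> (\<Sum>u\<in>F. Z v u) = 1 \<and>
    (\<Sum>u\<in>F. d v u powr p * Z v u) \<le> (\<Sum>u\<in>Gset F d Fp v. d v u powr p * yb u)
       + 3 powr p * gammav F d Fp v powr p * (1 - (\<Sum>u\<in>Gset F d Fp v. yb u))" by (rule bchoice)
  then obtain Z where Z: "\<And>v. v \<in> P' \<Longrightarrow> (\<forall>u\<in>F. 0 \<le> Z v u \<and> Z v u \<le> yb u) \<and> (\<Sum>u\<in>F. Z v u) = 1 \<and>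
    (\<Sum>u\<in>F. d v u powr p * Z v u) \<le> (\<Sum>u\<in>Gset F d Fp v. d v u powr p * yb u)
       + 3 powr p * gammav F d Fp v powr p * (1 - (\<Sum>u\<in>Gset F d Fp v. yb u))"
    by blast
  define xs where "xs = (\<lambda>v u. if v \<in> P' then Z v u else yb u)"
  have fxs: "feasible_assign P F yb xs"
  proof -
    have a: "(\<Sum>u\<in>F. xs v u) \<ge> 1" if "v \<in> P" for v
    proof (cases "v \<in> P'")
      case True then show ?thesis using Z[OF True] unfolding xs_def by simp
    next
      case False then show ?thesis using sumF unfolding xs_def by simp
    qed
    have b: "0 \<le> xs v u \<and> xs v u \<le> yb u" if "v \<in> P" "u \<in> F" for v u
      using Z ybn that unfolding xs_def by auto
    show ?thesis unfolding feasible_assign_def using a b by blast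
  qed
  have part1: "\<exists>xb. feasible_assign P F yb xb"
    using fxs by blast
  have part2: "lp_cost P F d p f w' xb yb \<le> T_bound P' F d p f w' Fp yb"
    if opt: "optimal_assign P F d p w' yb xb" for xb
  proof -
    have "assign_cost P F d p w' xb \<le> assign_cost P F d p w' xs"
      using opt fxs unfolding optimal_assign_def by blast
    also have "assign_cost P F d p w' xs = (\<Sum>v\<in>P'. \<Sum>u\<in>F. w' v * d v u powr p * xs v u)"
      unfolding assign_cost_def using P'P finP finF P'w
      by (intro sum.mono_neutral_cong_right) auto
    also have "\<dots> \<le> (\<Sum>v\<in>P'. w' v * ((\<Sum>u\<in>Gset F d Fp v. d v u powr p * yb u) +
        3 powr p * gammav F d Fp v powr p * (1 - (\<Sum>u\<in>Gset F d Fp v. yb u))))"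
    proof (rule sum_mono)
      fix v assume v: "v \<in> P'"
      have "(\<Sum>u\<in>F. w' v * d v u powr p * xs v u) = w' v * (\<Sum>u\<in>F. d v u powr p * Z v u)"
        using v unfolding xs_def by (simp add: sum_distrib_left mult.assoc)
      also have "\<dots> \<le> w' v * ((\<Sum>u\<in>Gset F d Fp v. d v u powr p * yb u) +
        3 powr p * gammav F d Fp v powr p * (1 - (\<Sum>u\<in>Gset F d Fp v. yb u)))"
        using Z[OF v] wnn v P'P by (intro mult_left_mono) auto
      finally show "(\<Sum>u\<in>F. w' v * d v u powr p * xs v u) \<le> \<dots>" .
    qed
    finally show ?thesis unfolding lp_cost_def T_bound_def assign_cost_def by simp
  qed
  show ?thesis using part1 part2 by blast
qed

end
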